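(* Let $\Lambda=K\mathcal{Q}/I$ be a finite-dimensional algebra over a field $K$ as in the context, let $A\geqslant1$ and let $\tilde{\Lambda}_A=K\tilde{\mathcal{Q}}_A/\tilde{I}_A$ be its stretched algebra. Let $m_0$ be the number of vertices and $m_1$ the number of arrows of $\mathcal{Q}$. Then: (1) $\tilde{\Lambda}_A$ is a finite-dimensional algebra; (2) $\tilde{\mathcal{Q}}_A$ has $m_0+m_1(A-1)$ vertices and $m_1A$ arrows; (3) $\{\tilde{g}^2_1,\dots,\tilde{g}^2_m\}$, where $\tilde{g}^2_i=\theta^*(g^2_i)$, is a minimal generating set of uniform elements for $\tilde{I}_A$; (4) if $I$ is generated by length homogeneous elements, then $\tilde{I}_A$ is generated by length homogeneous elements; (5) if $I$ is generated by length homogeneous elements all of length $d$, then $\tilde{I}_A$ is generated by length homogeneous elements all of length $dA$; (6) if $\Lambda$ is a monomial algebra, then $\tilde{\Lambda}_A$ is a monomial algebra.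
   Context: Conventions: $\mathcal{Q}$ is a finite quiver; $\mathfrak{o}(\alpha)$, $\mathfrak{t}(\alpha)$ denote start and end of an arrow; paths are written left to right. An element $x\in K\mathcal{Q}$ is uniform if $x=vx=xv'$ for vertices $v,v'$. $\Lambda=K\mathcal{Q}/I$ is finite-dimensional with $I$ an admissible ideal generated by a minimal set $g^2=\{g^2_1,\dots,g^2_m\}$ of uniform elements. An element of a path algebra is length homogeneous if it is a linear combination of paths all of the same length. $K\mathcal{Q}/I$ is monomial if $I$ is generated by paths. Stretched algebra: for $A\geqslant1$, the quiver $\tilde{\mathcal{Q}}_A$ has all vertices of $\mathcal{Q}$ plus, for each arrow $\alpha$ of $\mathcal{Q}$, new vertices $w_1,\dots,w_{A-1}$; each arrow $\alpha$ is replaced by arrows $\alpha_1,\dots,\alpha_A$ with $\mathfrak{o}(\alpha_1)=\mathfrak{o}(\alpha)$, $\mathfrak{t}(\alpha_j)=\mathfrak{o}(\alpha_{j+1})=w_j$ ($1\le j\le A-1$), $\mathfrak{t}(\alpha_A)=\mathfrak{t}(\alpha)$, and the only arrows incident with $w_j$ are $\alpha_j,\alpha_{j+1}$. $\theta^*:K\mathcal{Q}\to K\tilde{\mathcal{Q}}_A$ is the algebra homomorphism fixing vertices and sending $\alpha\mapsto\alpha_1\cdots\alpha_A$; $\tilde{I}_A$ is the ideal generated by $\theta^*(g^2_1),\dots,\theta^*(g^2_m)$; $\tilde{\Lambda}_A=K\tilde{\mathcal{Q}}_A/\tilde{I}_A$. *)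

theory Defs
  imports Main
begin

record ('v, 'a) quiver =
  verts :: "'v set"
  arrs  :: "'a set"
  src   :: "'a \<Rightarrow> 'v"
  tgt   :: "'a \<Rightarrow> 'v"

definition quiver :: "('v, 'a) quiver \<Rightarrow> bool" where
  "quiver Q \<longleftrightarrow> finite (verts Q) \<and> finite (arrs Q) \<and>
     (\<forall>a\<in>arrs Q. src Q a \<in> verts Q \<and> tgt Q a \<in> verts Q)"

text \<open>A path is a start vertex together with a (possibly empty) list of arrows,
  written left to right: consecutive arrows satisfy tgt a = src b.
  The trivial path at v is (v, []).\<close>

fun chain :: "('v, 'a) quiver \<Rightarrow> 'v \<Rightarrow> 'a list \<Rightarrow> bool" where
  "chain Q v [] = True"
| "chain Q v (a # as) = (a \<in> arrs Q \<and> src Q a = v \<and> chain Q (tgt Q a) as)"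

definition is_path :: "('v, 'a) quiver \<Rightarrow> 'v \<times> 'a list \<Rightarrow> bool" where
  "is_path Q p \<longleftrightarrow> fst p \<in> verts Q \<and> chain Q (fst p) (snd p)"

fun pend :: "('v, 'a) quiver \<Rightarrow> 'v \<Rightarrow> 'a list \<Rightarrow> 'v" where
  "pend Q v [] = v"
| "pend Q v (a # as) = pend Q (tgt Q a) as"

text \<open>Elements of the path algebra KQ: finitely supported K-valued functions on the
  paths of Q (coefficient of each path).\<close>

definition PA :: "('v, 'a) quiver \<Rightarrow> ('v \<times> 'a list \<Rightarrow> 'k::field) set" where
  "PA Q = {x. finite {p. x p \<noteq> 0} \<and> (\<forall>p. x p \<noteq> 0 \<longrightarrow> is_path Q p)}"

definition pmult :: "('v, 'a) quiver \<Rightarrow> ('v \<times> 'a list \<Rightarrow> 'k::field)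
    \<Rightarrow> ('v \<times> 'a list \<Rightarrow> 'k) \<Rightarrow> ('v \<times> 'a list \<Rightarrow> 'k)" where
  "pmult Q x y = (\<lambda>(v, cs). \<Sum>k\<in>{0..length cs}.
      x (v, take k cs) * y (pend Q v (take k cs), drop k cs))"

definition path_elem :: "'v \<times> 'a list \<Rightarrow> ('v \<times> 'a list \<Rightarrow> 'k::field)" where
  "path_elem p = (\<lambda>q. if q = p then 1 else 0)"

definition vtx :: "'v \<Rightarrow> ('v \<times> 'a list \<Rightarrow> 'k::field)" where
  "vtx v = path_elem (v, [])"

inductive_set ideal_gen :: "('v, 'a) quiver \<Rightarrow> ('v \<times> 'a list \<Rightarrow> 'k::field) set
    \<Rightarrow> ('v \<times> 'a list \<Rightarrow> 'k) set"
  for Q S where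
  gen: "s \<in> S \<Longrightarrow> s \<in> ideal_gen Q S"
| zero: "(\<lambda>_. 0) \<in> ideal_gen Q S"
| add: "x \<in> ideal_gen Q S \<Longrightarrow> y \<in> ideal_gen Q S \<Longrightarrow> (\<lambda>p. x p + y p) \<in> ideal_gen Q S"
| smult: "x \<in> ideal_gen Q S \<Longrightarrow> (\<lambda>p. c * x p) \<in> ideal_gen Q S"
| lmult: "x \<in> ideal_gen Q S \<Longrightarrow> a \<in> PA Q \<Longrightarrow> pmult Q a x \<in> ideal_gen Q S"
| rmult: "x \<in> ideal_gen Q S \<Longrightarrow> a \<in> PA Q \<Longrightarrow> pmult Q x a \<in> ideal_gen Q S"

definition uniform :: "('v, 'a) quiver \<Rightarrow> ('v \<times> 'a list \<Rightarrow> 'k::field) \<Rightarrow> bool" where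
  "uniform Q x \<longleftrightarrow> (\<exists>v\<in>verts Q. \<exists>v'\<in>verts Q.
      x = pmult Q (vtx v) x \<and> x = pmult Q x (vtx v'))"

text \<open>J^n for the arrow ideal J: elements supported on paths of length at least n.\<close>

definition supp_len_ge :: "('v, 'a) quiver \<Rightarrow> nat \<Rightarrow> ('v \<times> 'a list \<Rightarrow> 'k::field) set" where
  "supp_len_ge Q n = {x \<in> PA Q. \<forall>p. x p \<noteq> 0 \<longrightarrow> n \<le> length (snd p)}"

definition admissible :: "('v, 'a) quiver \<Rightarrow> ('v \<times> 'a list \<Rightarrow> 'k::field) set \<Rightarrow> bool" where
  "admissible Q I \<longleftrightarrow> I \<subseteq> PA Q \<and> (\<exists>N\<ge>2. supp_len_ge Q N \<subseteq> I) \<and> I \<subseteq> supp_len_ge Q 2"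

definition fin_dim_quot :: "('v, 'a) quiver \<Rightarrow> ('v \<times> 'a list \<Rightarrow> 'k::field) set \<Rightarrow> bool" where
  "fin_dim_quot Q I \<longleftrightarrow> (\<exists>F. finite F \<and> F \<subseteq> PA Q \<and>
      (\<forall>x\<in>PA Q. \<exists>c. (\<lambda>p. x p - (\<Sum>f\<in>F. c f * f p)) \<in> I))"

definition min_gen_set :: "('v, 'a) quiver \<Rightarrow> (nat \<Rightarrow> ('v \<times> 'a list \<Rightarrow> 'k::field)) \<Rightarrow> nat
    \<Rightarrow> ('v \<times> 'a list \<Rightarrow> 'k) set \<Rightarrow> bool" where
  "min_gen_set Q g m I \<longleftrightarrow> (\<forall>i<m. g i \<in> PA Q \<and> uniform Q (g i)) \<and>
      ideal_gen Q (g ` {..<m}) = I \<and>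
      (\<forall>i<m. ideal_gen Q (g ` ({..<m} - {i})) \<noteq> I)"

definition len_homog :: "('v \<times> 'a list \<Rightarrow> 'k::field) \<Rightarrow> nat \<Rightarrow> bool" where
  "len_homog x d \<longleftrightarrow> (\<forall>p. x p \<noteq> 0 \<longrightarrow> length (snd p) = d)"

definition gen_by_homog :: "('v, 'a) quiver \<Rightarrow> ('v \<times> 'a list \<Rightarrow> 'k::field) set \<Rightarrow> bool" where
  "gen_by_homog Q I \<longleftrightarrow> (\<exists>G \<subseteq> PA Q. ideal_gen Q G = I \<and> (\<forall>x\<in>G. \<exists>d. len_homog x d))"

definition gen_by_homog_len :: "('v, 'a) quiver \<Rightarrow> ('v \<times> 'a list \<Rightarrow> 'k::field) set \<Rightarrow> nat \<Rightarrow> bool" where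
  "gen_by_homog_len Q I d \<longleftrightarrow> (\<exists>G \<subseteq> PA Q. ideal_gen Q G = I \<and> (\<forall>x\<in>G. len_homog x d))"

definition monomial :: "('v, 'a) quiver \<Rightarrow> ('v \<times> 'a list \<Rightarrow> 'k::field) set \<Rightarrow> bool" where
  "monomial Q I \<longleftrightarrow> (\<exists>P. (\<forall>p\<in>P. is_path Q p) \<and> ideal_gen Q (path_elem ` P) = I)"

text \<open>New vertex w_j of arrow a is Inr (a, j), 1 \<le> j \<le> A-1; new arrow a_j is (a, j), 1 \<le> j \<le> A.\<close>

definition stretch :: "('v, 'a) quiver \<Rightarrow> nat \<Rightarrow> ('v + 'a \<times> nat, 'a \<times> nat) quiver" where
  "stretch Q A = \<lparr> verts = Inl ` verts Q \<union> {Inr (a, j) | a j. a \<in> arrs Q \<and> 1 \<le> j \<and> j \<le> A - 1},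
      arrs = {(a, j) | a j. a \<in> arrs Q \<and> 1 \<le> j \<and> j \<le> A},
      src = (\<lambda>(a, j). if j = 1 then Inl (src Q a) else Inr (a, j - 1)),
      tgt = (\<lambda>(a, j). if j = A then Inl (tgt Q a) else Inr (a, j)) \<rparr>"

definition theta_path :: "nat \<Rightarrow> 'v \<times> 'a list \<Rightarrow> ('v + 'a \<times> nat) \<times> ('a \<times> nat) list" where
  "theta_path A p = (Inl (fst p), concat (map (\<lambda>a. map (\<lambda>j. (a, j)) [1..<A+1]) (snd p)))"

text \<open>theta* is the K-linear extension of theta_path.\<close>

definition theta :: "nat \<Rightarrow> ('v \<times> 'a list \<Rightarrow> 'k::field)
    \<Rightarrow> (('v + 'a \<times> nat) \<times> ('a \<times> nat) list \<Rightarrow> 'k)" where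
  "theta A x = (\<lambda>q. \<Sum>p\<in>{p. x p \<noteq> 0 \<and> theta_path A p = q}. x p)"

end

theory Submission
  imports Defs
begin


lemma pend_append: "pend Q v (xs @ ys) = pend Q (pend Q v xs) ys"
  by (induction xs arbitrary: v) auto

lemma chain_append: "chain Q v (xs @ ys) = (chain Q v xs \<and> chain Q (pend Q v xs) ys)"
  by (induction xs arbitrary: v) auto

lemma pend_last: "pend Q v l = (if l = [] then v else tgt Q (last l))"
  by (induction l arbitrary: v) auto

lemma pmult_at: "pmult Q x y (v, cs) = (\<Sum>k\<in>{..length cs}.
      x (v, take k cs) * y (pend Q v (take k cs), drop k cs))"
  by (simp add: pmult_def atLeast0AtMost)

lemma pmult_assoc:
  fixes x y z :: "'v \<times> 'a list \<Rightarrow> 'k::field"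
  shows "pmult Q (pmult Q x y) z = pmult Q x (pmult Q y z)"
proof (rule ext, clarify)
  fix v and cs :: "'a list"
  let ?n = "length cs"
  define g where "g i j = x (v, take i cs) * y (pend Q v (take i cs), take j (drop i cs)) *
     z (pend Q (pend Q v (take i cs)) (take j (drop i cs)), drop j (drop i cs))" for i j
  have "pmult Q (pmult Q x y) z (v, cs) = (\<Sum>k\<le>?n. \<Sum>i\<le>k. g i (k - i))"
    unfolding pmult_at sum_distrib_right
  proof (rule sum.cong[OF refl], rule sum.cong)
    fix k assume "k \<in> {..?n}" then show "{..length (take k cs)} = {..k}" by auto
  next
    fix k i assume k: "k \<in> {..?n}" and i: "i \<in> {..k}"
    have ik: "i \<le> k" "k \<le> ?n" using k i by auto
    have tk: "take k cs = take i cs @ take (k - i) (drop i cs)"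
      using take_add[of i "k - i" cs] ik by simp
    show "x (v, take i (take k cs)) * y (pend Q v (take i (take k cs)), drop i (take k cs)) *
         z (pend Q v (take k cs), drop k cs) = g i (k - i)"
      unfolding g_def using ik by (simp add: tk pend_append min_def drop_take)
  qed
  also have "\<dots> = (\<Sum>(i,j)\<in>{(i,j). i+j \<le> ?n}. g i j)"
    by (rule sum.triangle_reindex_eq[symmetric])
  also have "{(i,j). i+j \<le> ?n} = Sigma {..?n} (\<lambda>i. {..?n - i})" by auto
  also have "(\<Sum>(i,j)\<in>Sigma {..?n} (\<lambda>i. {..?n - i}). g i j) = (\<Sum>i\<le>?n. \<Sum>j\<le>?n-i. g i j)"
    by (rule sum.Sigma[symmetric]) auto
  also have "\<dots> = pmult Q x (pmult Q y z) (v, cs)"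
    unfolding pmult_at sum_distrib_left
    by (rule sum.cong[OF refl]) (simp add: g_def mult.assoc)
  finally show "pmult Q (pmult Q x y) z (v, cs) = pmult Q x (pmult Q y z) (v, cs)" .
qed


declare upt_Suc[simp del]

definition th :: "nat \<Rightarrow> 'a list \<Rightarrow> ('a \<times> nat) list" where
  "th A l = concat (map (\<lambda>a. map (\<lambda>j. (a, j)) [1..<A+1]) l)"

definition blk :: "nat \<Rightarrow> 'a \<Rightarrow> ('a \<times> nat) list" where
  "blk A a = map (\<lambda>j. (a, j)) [1..<A+1]"

lemma theta_path_th: "theta_path A p = (Inl (fst p), th A (snd p))"
  by (simp add: theta_path_def th_def)

lemma th_Nil[simp]: "th A [] = []" by (simp add: th_def)
lemma th_Cons[simp]: "th A (a # l) = blk A a @ th A l" by (simp add: th_def blk_def)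
lemma th_append[simp]: "th A (l1 @ l2) = th A l1 @ th A l2" by (simp add: th_def)
lemma length_blk[simp]: "length (blk A a) = A" by (simp add: blk_def)
lemma length_th[simp]: "length (th A l) = A * length l" by (induction l) auto

lemma blk_Cons: "1 \<le> A \<Longrightarrow> \<exists>r. blk A a = (a, 1) # r"
  by (simp add: blk_def upt_conv_Cons)

lemma blk_ne: "1 \<le> A \<Longrightarrow> blk A a \<noteq> []"
  by (simp add: blk_def)

lemma nth_blk: "k < A \<Longrightarrow> blk A a ! k = (a, Suc k)"
  by (simp add: blk_def)

lemma last_blk: "1 \<le> A \<Longrightarrow> last (blk A a) = (a, A)"
  by (simp add: blk_def last_map)

lemma take_th: "take (A * i) (th A l) = th A (take i l)"
proof (induction l arbitrary: i)
  case (Cons a l) then show ?case by (cases i) simp_all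
qed simp

lemma drop_th: "drop (A * i) (th A l) = th A (drop i l)"
proof (induction l arbitrary: i)
  case (Cons a l) then show ?case by (cases i) simp_all
qed simp

lemma th_inj: "1 \<le> A \<Longrightarrow> th A l1 = th A l2 \<Longrightarrow> l1 = l2"
proof (induction l1 arbitrary: l2)
  case Nil
  then have "length (th A l2) = 0" by simp
  then show ?case using Nil(1) by simp
next
  case (Cons a l1)
  then show ?case
  proof (cases l2)
    case Nil then show ?thesis using Cons.prems blk_ne[of A a] by simp
  next
    case (Cons b l2')
    with Cons.prems have "blk A a @ th A l1 = blk A b @ th A l2'" by simp
    then have "blk A a = blk A b" "th A l1 = th A l2'" by (simp_all add: append_eq_append_conv)
    then have "a = b"
      using arg_cong[OF \<open>blk A a = blk A b\<close>, of hd] blk_Cons[OF Cons.prems(1), of a] blk_Cons[OF Cons.prems(1), of b]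
      by auto
    then show ?thesis using Cons Cons.prems(1) Cons.IH \<open>th A l1 = th A l2'\<close> by simp
  qed
qed

lemma inj_theta_path: assumes "1 \<le> A" shows "inj (theta_path A)"
  unfolding inj_def theta_path_th using th_inj[OF assms] by (auto simp: prod_eq_iff)

lemma nth_th: "1 \<le> A \<Longrightarrow> k < A * length l \<Longrightarrow> th A l ! k = (l ! (k div A), k mod A + 1)"
proof (induction l arbitrary: k)
  case Nil then show ?case by simp
next
  case (Cons a l)
  show ?case
  proof (cases "k < A")
    case True then show ?thesis by (simp add: nth_append nth_blk)
  next
    case False
    then have "th A (a # l) ! k = th A l ! (k - A)" by (simp add: nth_append)
    also have "\<dots> = (l ! ((k - A) div A), (k - A) mod A + 1)"
      using Cons False by simp
    also have "\<dots> = ((a # l) ! (k div A), k mod A + 1)"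
      using False Cons.prems(1) by (simp add: le_div_geq le_mod_geq)
    finally show ?thesis .
  qed
qed

lemma verts_stretch: "verts (stretch Q A) = Inl ` verts Q \<union> {Inr (a, j) | a j. a \<in> arrs Q \<and> 1 \<le> j \<and> j \<le> A - 1}"
  by (simp add: stretch_def)
lemma arrs_stretch: "arrs (stretch Q A) = {(a, j) | a j. a \<in> arrs Q \<and> 1 \<le> j \<and> j \<le> A}"
  by (simp add: stretch_def)
lemma src_stretch: "src (stretch Q A) (a, j) = (if j = 1 then Inl (src Q a) else Inr (a, j - 1))"
  by (simp add: stretch_def)
lemma tgt_stretch: "tgt (stretch Q A) (a, j) = (if j = A then Inl (tgt Q a) else Inr (a, j))"
  by (simp add: stretch_def)

lemma pend_blk: "1 \<le> A \<Longrightarrow> pend (stretch Q A) w (blk A a) = Inl (tgt Q a)"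
  by (simp add: pend_last last_blk tgt_stretch) (simp add: blk_def)

lemma pend_th: "1 \<le> A \<Longrightarrow> pend (stretch Q A) (Inl v) (th A l) = Inl (pend Q v l)"
  by (induction l arbitrary: v) (auto simp: pend_append pend_blk)

lemma chain_blk_aux: "a \<in> arrs Q \<Longrightarrow> 1 \<le> j \<Longrightarrow>
   chain (stretch Q A) (src (stretch Q A) (a, j)) (map (\<lambda>i. (a, i)) [j..<A+1])"
proof (induction "A + 1 - j" arbitrary: j)
  case 0 then show ?case by simp
next
  case (Suc n)
  then have jA: "j < A + 1" by simp
  have "chain (stretch Q A) (tgt (stretch Q A) (a, j)) (map (\<lambda>i. (a, i)) [Suc j..<A+1])"
  proof (cases "j = A")
    case True then show ?thesis by simp
  next
    case False
    have "tgt (stretch Q A) (a, j) = src (stretch Q A) (a, Suc j)"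
      using False Suc.prems by (simp add: tgt_stretch src_stretch)
    then show ?thesis using Suc.hyps(1)[of "Suc j"] Suc.hyps(2) Suc.prems by simp
  qed
  then show ?case using jA Suc.prems by (simp add: upt_conv_Cons arrs_stretch)
qed

lemma chain_blk: "1 \<le> A \<Longrightarrow> a \<in> arrs Q \<Longrightarrow> chain (stretch Q A) (Inl (src Q a)) (blk A a)"
  using chain_blk_aux[of a Q 1 A] by (simp add: blk_def src_stretch)

lemma chain_th: "1 \<le> A \<Longrightarrow> chain Q v l \<Longrightarrow> chain (stretch Q A) (Inl v) (th A l)"
  by (induction l arbitrary: v) (auto simp: chain_append pend_blk chain_blk)

lemma chain_th_rev: "1 \<le> A \<Longrightarrow> chain (stretch Q A) (Inl v) (th A l) \<Longrightarrow> chain Q v l"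
proof (induction l arbitrary: v)
  case Nil then show ?case by simp
next
  case (Cons a l)
  then have c1: "chain (stretch Q A) (Inl v) (blk A a)" and c2: "chain (stretch Q A) (Inl (tgt Q a)) (th A l)"
    by (auto simp: chain_append pend_blk)
  from blk_Cons[OF Cons.prems(1), of a] obtain r where "blk A a = (a, 1) # r" by blast
  with c1 have "a \<in> arrs Q" "src Q a = v"
    by (auto simp: arrs_stretch src_stretch)
  then show ?case using Cons.IH[OF Cons.prems(1) c2] by simp
qed




lemma theta_at: assumes "1 \<le> A" shows "theta A x (theta_path A p) = x p"
proof -
  have "{p'. x p' \<noteq> 0 \<and> theta_path A p' = theta_path A p} = (if x p \<noteq> 0 then {p} else {})"
    using inj_theta_path[OF assms] by (auto dest: injD)
  then show ?thesis by (simp add: theta_def)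
qed

lemma theta_nz: "theta A x q \<noteq> 0 \<Longrightarrow> \<exists>p. q = theta_path A p \<and> x p \<noteq> 0"
proof (rule ccontr)
  assume "theta A x q \<noteq> 0" "\<not> (\<exists>p. q = theta_path A p \<and> x p \<noteq> 0)"
  then have "{p. x p \<noteq> 0 \<and> theta_path A p = q} = {}" by auto
  with \<open>theta A x q \<noteq> 0\<close> show False by (simp add: theta_def)
qed

lemma theta_nz': "theta A x (w, l) \<noteq> 0 \<Longrightarrow> \<exists>v l'. w = Inl v \<and> l = th A l' \<and> x (v, l') \<noteq> 0"
  using theta_nz[of A x "(w, l)"] by (auto simp: theta_path_th)

definition pi :: "nat \<Rightarrow> (('v + 'a \<times> nat) \<times> ('a \<times> nat) list \<Rightarrow> 'k) \<Rightarrow> ('v \<times> 'a list \<Rightarrow> 'k)" where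
  "pi A y = (\<lambda>p. y (theta_path A p))"

lemma pi_theta: "1 \<le> A \<Longrightarrow> pi A (theta A x) = x"
  by (simp add: pi_def theta_at)

lemma sum_mult_reindex:
  fixes f :: "nat \<Rightarrow> 'k::comm_monoid_add"
  assumes A: "1 \<le> A" and z: "\<And>k. k \<le> A * n \<Longrightarrow> \<not> A dvd k \<Longrightarrow> f k = 0"
  shows "(\<Sum>k\<le>A * n. f k) = (\<Sum>i\<le>n. f (A * i))"
proof -
  have "(\<Sum>k\<le>A * n. f k) = (\<Sum>k\<in>(\<lambda>i. A * i) ` {..n}. f k)"
  proof (rule sum.mono_neutral_right)
    show "\<forall>i\<in>{..A * n} - (\<lambda>i. A * i) ` {..n}. f i = 0"
    proof
      fix i assume i: "i \<in> {..A * n} - (\<lambda>i. A * i) ` {..n}"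
      have "\<not> A dvd i"
      proof
        assume "A dvd i"
        then obtain j where "i = A * j" by blast
        with i A have "j \<le> n" by auto
        with i \<open>i = A * j\<close> show False by auto
      qed
      then show "f i = 0" using z i by auto
    qed
  qed auto
  also have "\<dots> = (\<Sum>i\<le>n. f (A * i))"
    by (rule sum.reindex_cong[where l="\<lambda>i. A * i"]) (use A in \<open>auto simp: inj_on_def\<close>)
  finally show ?thesis .
qed

lemma take_th_dvd: assumes "take k (th A cs) = th A l" "k \<le> A * length cs" shows "A dvd k"
proof -
  have "length (take k (th A cs)) = A * length l" using assms(1) by simp
  then have "k = A * length l" using assms(2) by (simp add: min_def split: if_splits)
  then show ?thesis by simp
qed

lemma theta_at': "1 \<le> A \<Longrightarrow> theta A x (Inl v, th A l) = x (v, l)"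
  using theta_at[of A x "(v, l)"] by (simp add: theta_path_th)

lemma theta_pmult:
  fixes x y :: "'v \<times> 'a list \<Rightarrow> 'k::field"
  assumes A: "1 \<le> A"
  shows "theta A (pmult Q x y) = pmult (stretch Q A) (theta A x) (theta A y)"
proof (rule ext)
  fix q :: "('v + 'a \<times> nat) \<times> ('a \<times> nat) list"
  show "theta A (pmult Q x y) q = pmult (stretch Q A) (theta A x) (theta A y) q"
  proof (cases "q \<in> range (theta_path A)")
    case True
    then obtain v cs where q: "q = theta_path A (v, cs)" by auto
    have "pmult (stretch Q A) (theta A x) (theta A y) q =
       (\<Sum>k\<le>A * length cs. theta A x (Inl v, take k (th A cs)) *
          theta A y (pend (stretch Q A) (Inl v) (take k (th A cs)), drop k (th A cs)))"
      by (simp add: q theta_path_th pmult_at)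
    also have "\<dots> = (\<Sum>i\<le>length cs. theta A x (Inl v, take (A*i) (th A cs)) *
          theta A y (pend (stretch Q A) (Inl v) (take (A*i) (th A cs)), drop (A*i) (th A cs)))"
    proof (rule sum_mult_reindex[OF A])
      fix k assume k: "k \<le> A * length cs" "\<not> A dvd k"
      have "theta A x (Inl v, take k (th A cs)) = 0"
      proof (rule ccontr)
        assume "theta A x (Inl v, take k (th A cs)) \<noteq> 0"
        then obtain l' where "take k (th A cs) = th A l'" using theta_nz' by blast
        then show False using take_th_dvd k by blast
      qed
      then show "theta A x (Inl v, take k (th A cs)) *
          theta A y (pend (stretch Q A) (Inl v) (take k (th A cs)), drop k (th A cs)) = 0" by simp
    qed
    also have "\<dots> = pmult Q x y (v, cs)"
      by (simp add: take_th drop_th pend_th[OF A] pmult_at theta_at'[OF A])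
    also have "\<dots> = theta A (pmult Q x y) q"
      by (simp add: q theta_at[OF A])
    finally show ?thesis by simp
  next
    case False
    then have l: "theta A (pmult Q x y) q = 0"
      using theta_nz by blast
    obtain w cs where q: "q = (w, cs)" by fastforce
    have "pmult (stretch Q A) (theta A x) (theta A y) q = 0"
      unfolding q pmult_at
    proof (rule sum.neutral, rule ballI)
      fix k assume "k \<in> {..length cs}"
      show "theta A x (w, take k cs) * theta A y (pend (stretch Q A) w (take k cs), drop k cs) = 0"
      proof (rule ccontr)
        assume "\<not> ?thesis"
        then have "theta A x (w, take k cs) \<noteq> 0" "theta A y (pend (stretch Q A) w (take k cs), drop k cs) \<noteq> 0"
          by auto
        then obtain v l1 l2 where "w = Inl v" "take k cs = th A l1" "drop k cs = th A l2"
          using theta_nz' by meson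
        then have "cs = th A (l1 @ l2)"
          by (metis append_take_drop_id th_append)
        then have "q = theta_path A (v, l1 @ l2)"
          by (simp add: q theta_path_th \<open>w = Inl v\<close>)
        then show False using False by auto
      qed
    qed
    then show ?thesis using l by simp
  qed
qed



lemma theta_path_elem: assumes A: "1 \<le> A" shows "theta A (path_elem p) = path_elem (theta_path A p)"
proof
  fix q show "theta A (path_elem p) q = path_elem (theta_path A p) q"
  proof (cases "q \<in> range (theta_path A)")
    case True
    then obtain p' where "q = theta_path A p'" by auto
    moreover have "(theta_path A p' = theta_path A p) = (p' = p)"
      by (rule inj_eq[OF inj_theta_path[OF A]])
    ultimately show ?thesis by (simp add: theta_at[OF A] path_elem_def)
  next
    case False
    then have "theta A (path_elem p) q = 0" using theta_nz by blast
    moreover have "q \<noteq> theta_path A p" using False by auto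
    ultimately show ?thesis by (simp add: path_elem_def)
  qed
qed

lemma theta_vtx: "1 \<le> A \<Longrightarrow> theta A (vtx v) = vtx (Inl v)"
  by (simp add: vtx_def theta_path_elem theta_path_th)

lemma theta_add: assumes A: "1 \<le> A"
  shows "theta A (\<lambda>p. x p + y p) = (\<lambda>q. theta A x q + theta A y q)"
proof
  fix q show "theta A (\<lambda>p. x p + y p) q = theta A x q + theta A y q"
  proof (cases "q \<in> range (theta_path A)")
    case True
    then obtain p' where "q = theta_path A p'" by auto
    then show ?thesis by (simp add: theta_at[OF A])
  next
    case False
    then have "theta A x q = 0" "theta A y q = 0" "theta A (\<lambda>p. x p + y p) q = 0"
      using theta_nz by blast+
    then show ?thesis by simp
  qed
qed

lemma theta_smult: assumes A: "1 \<le> A"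
  shows "theta A (\<lambda>p. c * x p) = (\<lambda>q. c * theta A x q)"
proof
  fix q show "theta A (\<lambda>p. c * x p) q = c * theta A x q"
  proof (cases "q \<in> range (theta_path A)")
    case True
    then obtain p' where "q = theta_path A p'" by auto
    then show ?thesis by (simp add: theta_at[OF A])
  next
    case False
    then have "theta A x q = 0" "theta A (\<lambda>p. c * x p) q = 0"
      using theta_nz by blast+
    then show ?thesis by simp
  qed
qed

lemma theta_zero: "theta A (\<lambda>_. 0) = (\<lambda>_. 0)"
  by (simp add: theta_def)

lemma quiver_stretch: fixes Q :: "('v, 'a) quiver" assumes "quiver Q" shows "quiver (stretch Q A)"
proof -
  have f1: "finite (Inl ` verts Q :: ('v + 'a \<times> nat) set)" using assms by (simp add: quiver_def)
  have "{Inr (a, j) | a j. a \<in> arrs Q \<and> 1 \<le> j \<and> j \<le> A - 1} \<subseteq> (\<lambda>(a,j). Inr (a, j)) ` (arrs Q \<times> {..A})"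
    by auto
  moreover have "finite ((\<lambda>(a,j). Inr (a, j)) ` (arrs Q \<times> {..A}) :: ('v + 'a \<times> nat) set)"
    using assms by (simp add: quiver_def)
  ultimately have f2: "finite {Inr (a, j) :: ('v + 'a \<times> nat) | a j. a \<in> arrs Q \<and> 1 \<le> j \<and> j \<le> A - 1}"
    by (rule finite_subset)
  have "{(a, j) | a j. a \<in> arrs Q \<and> 1 \<le> j \<and> j \<le> A} \<subseteq> arrs Q \<times> {..A}" by auto
  then have f3: "finite {(a, j) | a j. a \<in> arrs Q \<and> 1 \<le> j \<and> j \<le> A}"
    using assms by (auto simp: quiver_def intro: finite_subset)
  show ?thesis using f1 f2 f3 assms
    by (auto simp: quiver_def verts_stretch arrs_stretch src_stretch tgt_stretch)
qed

lemma is_path_theta: "1 \<le> A \<Longrightarrow> is_path Q p \<Longrightarrow> is_path (stretch Q A) (theta_path A p)"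
  by (auto simp: is_path_def theta_path_th verts_stretch intro: chain_th)

lemma is_path_theta_rev: "1 \<le> A \<Longrightarrow> is_path (stretch Q A) (theta_path A p) \<Longrightarrow> is_path Q p"
  by (auto simp: is_path_def theta_path_th verts_stretch intro: chain_th_rev)

lemma PA_theta: assumes A: "1 \<le> A" and x: "x \<in> PA Q" shows "theta A x \<in> PA (stretch Q A)"
proof -
  have "{q. theta A x q \<noteq> 0} \<subseteq> theta_path A ` {p. x p \<noteq> 0}"
    using theta_nz by fastforce
  moreover have "finite (theta_path A ` {p. x p \<noteq> 0})" using x by (simp add: PA_def)
  ultimately have "finite {q. theta A x q \<noteq> 0}" by (rule finite_subset)
  moreover have "\<forall>q. theta A x q \<noteq> 0 \<longrightarrow> is_path (stretch Q A) q"
    using theta_nz x A is_path_theta unfolding PA_def by blast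
  ultimately show ?thesis by (simp add: PA_def)
qed

lemma PA_pi: assumes A: "1 \<le> A" and y: "y \<in> PA (stretch Q A)" shows "pi A y \<in> PA Q"
proof -
  have "{p. pi A y p \<noteq> 0} = theta_path A -` {q. y q \<noteq> 0}" by (auto simp: pi_def)
  moreover have "finite (theta_path A -` {q. y q \<noteq> 0})"
    by (rule finite_vimageI) (use y inj_theta_path[OF A] in \<open>auto simp: PA_def\<close>)
  ultimately have "finite {p. pi A y p \<noteq> 0}" by simp
  moreover have "\<forall>p. pi A y p \<noteq> 0 \<longrightarrow> is_path Q p"
    unfolding pi_def using y is_path_theta_rev[OF A, of Q] unfolding PA_def by blast
  ultimately show ?thesis by (simp add: PA_def)
qed

lemma theta_ideal: assumes A: "1 \<le> A" and x: "x \<in> ideal_gen Q S"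
  shows "theta A x \<in> ideal_gen (stretch Q A) (theta A ` S)"
  using x
proof induction
  case (gen s) then show ?case by (auto intro: ideal_gen.gen)
next
  case zero then show ?case by (simp add: theta_zero ideal_gen.zero)
next
  case (add x y) then show ?case by (simp add: theta_add[OF A] ideal_gen.add)
next
  case (smult x c) then show ?case by (simp add: theta_smult[OF A] ideal_gen.smult)
next
  case (lmult x a) then show ?case by (simp add: theta_pmult[OF A] ideal_gen.lmult PA_theta[OF A])
next
  case (rmult x a) then show ?case by (simp add: theta_pmult[OF A] ideal_gen.rmult PA_theta[OF A])
qed

lemma ideal_gen_subset: assumes "S \<subseteq> ideal_gen Q T" "x \<in> ideal_gen Q S" shows "x \<in> ideal_gen Q T"
  using assms(2)
proof induction
  case (gen s) then show ?case using assms(1) by auto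
qed (auto intro: ideal_gen.intros)

lemma ideal_gen_mono: "S \<subseteq> T \<Longrightarrow> ideal_gen Q S \<subseteq> ideal_gen Q T"
  by (meson ideal_gen.gen ideal_gen_subset subset_eq)

lemma ideal_sum_list: "(\<forall>t\<in>set ts. F t \<in> ideal_gen Q S) \<Longrightarrow> (\<lambda>q. \<Sum>t\<leftarrow>ts. F t q) \<in> ideal_gen Q S"
proof (induction ts)
  case Nil then show ?case by (simp add: ideal_gen.zero)
next
  case (Cons t ts)
  then have "(\<lambda>q. F t q + (\<lambda>q. \<Sum>t\<leftarrow>ts. F t q) q) \<in> ideal_gen Q S"
    by (intro ideal_gen.add) auto
  then show ?case by simp
qed



lemma pmult_add_right: "pmult Q a (\<lambda>q. x q + y q) = (\<lambda>q. pmult Q a x q + pmult Q a y q)"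
  by (rule ext, clarify) (simp add: pmult_at distrib_left sum.distrib)

lemma pmult_add_left: "pmult Q (\<lambda>q. x q + y q) a = (\<lambda>q. pmult Q x a q + pmult Q y a q)"
  by (rule ext, clarify) (simp add: pmult_at distrib_right sum.distrib)

lemma pmult_zero_right: "pmult Q a (\<lambda>_. 0) = (\<lambda>_. 0)"
  by (rule ext, clarify) (simp add: pmult_at)

lemma pmult_zero_left: "pmult Q (\<lambda>_. 0) a = (\<lambda>_. 0)"
  by (rule ext, clarify) (simp add: pmult_at)

lemma pmult_smult_left: "pmult Q (\<lambda>p. c * x p) y = (\<lambda>q. c * pmult Q x y q)"
  by (rule ext, clarify) (simp add: pmult_at sum_distrib_left mult.assoc)

lemma pmult_sum_list_right:
  "pmult Q a (\<lambda>q. \<Sum>t\<leftarrow>ts. F t q) = (\<lambda>q. \<Sum>t\<leftarrow>ts. pmult Q a (F t) q)"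
proof (induction ts)
  case Nil then show ?case by (simp add: pmult_zero_right)
next
  case (Cons t ts)
  have "pmult Q a (\<lambda>q. \<Sum>t\<leftarrow>t # ts. F t q) = pmult Q a (\<lambda>q. F t q + (\<lambda>q. \<Sum>t\<leftarrow>ts. F t q) q)"
    by simp
  also have "\<dots> = (\<lambda>q. pmult Q a (F t) q + pmult Q a (\<lambda>q. \<Sum>t\<leftarrow>ts. F t q) q)"
    by (rule pmult_add_right)
  finally show ?case using Cons by simp
qed

lemma pmult_sum_list_left:
  "pmult Q (\<lambda>q. \<Sum>t\<leftarrow>ts. F t q) a = (\<lambda>q. \<Sum>t\<leftarrow>ts. pmult Q (F t) a q)"
proof (induction ts)
  case Nil then show ?case by (simp add: pmult_zero_left)
next
  case (Cons t ts)
  have "pmult Q (\<lambda>q. \<Sum>t\<leftarrow>t # ts. F t q) a = pmult Q (\<lambda>q. F t q + (\<lambda>q. \<Sum>t\<leftarrow>ts. F t q) q) a"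
    by simp
  also have "\<dots> = (\<lambda>q. pmult Q (F t) a q + pmult Q (\<lambda>q. \<Sum>t\<leftarrow>ts. F t q) a q)"
    by (rule pmult_add_left)
  finally show ?case using Cons by simp
qed

lemma vtx_PA: "v \<in> verts Q \<Longrightarrow> (vtx v :: 'v \<times> 'a list \<Rightarrow> 'k::field) \<in> PA Q"
proof -
  assume v: "v \<in> verts Q"
  have "{p. (vtx v :: _ \<Rightarrow> 'k) p \<noteq> 0} = {(v, [])}" by (auto simp: vtx_def path_elem_def)
  then show "vtx v \<in> PA Q" using v unfolding PA_def by (auto simp: is_path_def vtx_def path_elem_def split: if_splits)
qed

lemma path_elem_PA: "is_path Q p \<Longrightarrow> (path_elem p :: 'v \<times> 'a list \<Rightarrow> 'k::field) \<in> PA Q"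
proof -
  assume v: "is_path Q p"
  have "{q. (path_elem p :: _ \<Rightarrow> 'k) q \<noteq> 0} = {p}" by (auto simp: path_elem_def)
  then show "path_elem p \<in> PA Q" using v unfolding PA_def by (auto simp: path_elem_def split: if_splits)
qed

lemma PA_smult: "x \<in> PA Q \<Longrightarrow> (\<lambda>p. c * x p) \<in> PA Q"
  unfolding PA_def by (auto intro: finite_subset[of _ "{p. x p \<noteq> 0}"])

lemma PA_pmult: assumes x: "x \<in> PA Q" and y: "y \<in> PA Q" shows "pmult Q x y \<in> PA Q"
proof -
  let ?f = "\<lambda>(p1 :: 'a \<times> 'b list, p2 :: 'a \<times> 'b list). (fst p1, snd p1 @ snd p2)"
  have key: "\<exists>k\<le>length cs. x (v, take k cs) \<noteq> 0 \<and> y (pend Q v (take k cs), drop k cs) \<noteq> 0"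
    if "pmult Q x y (v, cs) \<noteq> 0" for v cs
  proof -
    from that obtain k where "k \<in> {..length cs}"
        "x (v, take k cs) * y (pend Q v (take k cs), drop k cs) \<noteq> 0"
      unfolding pmult_at by (meson sum.not_neutral_contains_not_neutral)
    then show ?thesis by auto
  qed
  have "{q. pmult Q x y q \<noteq> 0} \<subseteq> ?f ` ({p. x p \<noteq> 0} \<times> {p. y p \<noteq> 0})"
  proof clarify
    fix v cs assume "pmult Q x y (v, cs) \<noteq> 0"
    from key[OF this] obtain k where "x (v, take k cs) \<noteq> 0" "y (pend Q v (take k cs), drop k cs) \<noteq> 0"
      by blast
    then show "(v, cs) \<in> ?f ` ({p. x p \<noteq> 0} \<times> {p. y p \<noteq> 0})"
      by (intro image_eqI[of _ _ "((v, take k cs), (pend Q v (take k cs), drop k cs))"]) auto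
  qed
  moreover have "finite (?f ` ({p. x p \<noteq> 0} \<times> {p. y p \<noteq> 0}))"
    using x y by (simp add: PA_def)
  ultimately have "finite {q. pmult Q x y q \<noteq> 0}" by (rule finite_subset)
  moreover have "is_path Q (v, cs)" if "pmult Q x y (v, cs) \<noteq> 0" for v cs
  proof -
    from key[OF that] obtain k where "x (v, take k cs) \<noteq> 0" "y (pend Q v (take k cs), drop k cs) \<noteq> 0"
      by blast
    then have "is_path Q (v, take k cs)" "is_path Q (pend Q v (take k cs), drop k cs)"
      using x y by (auto simp: PA_def)
    then show ?thesis
      by (simp add: is_path_def) (metis append_take_drop_id chain_append)
  qed
  ultimately show ?thesis by (auto simp: PA_def)
qed

definition trm :: "('v, 'a) quiver \<Rightarrow> ('v \<times> 'a list \<Rightarrow> 'k::field) \<times> ('v \<times> 'a list \<Rightarrow> 'k) \<times> ('v \<times> 'a list \<Rightarrow> 'k)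
   \<Rightarrow> ('v \<times> 'a list \<Rightarrow> 'k)" where
  "trm Q t = pmult Q (pmult Q (fst t) (fst (snd t))) (snd (snd t))"

lemma ideal_repr:
  assumes U: "\<forall>s\<in>S. uniform Q s" and y: "y \<in> ideal_gen Q S"
  shows "\<exists>ts. (\<forall>t\<in>set ts. fst t \<in> PA Q \<and> fst (snd t) \<in> S \<and> snd (snd t) \<in> PA Q) \<and>
             y = (\<lambda>q. \<Sum>t\<leftarrow>ts. trm Q t q)"
  using y
proof induction
  case (gen s)
  then obtain v v' where vv: "v \<in> verts Q" "v' \<in> verts Q" "s = pmult Q (vtx v) s" "s = pmult Q s (vtx v')"
    using U by (auto simp: uniform_def)
  then have "trm Q (vtx v, s, vtx v') = s" by (simp add: trm_def)
  then show ?case using vv gen by (intro exI[of _ "[(vtx v, s, vtx v')]"]) (simp add: vtx_PA)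
next
  case zero then show ?case by (intro exI[of _ "[]"]) simp
next
  case (add x y)
  then obtain ts1 ts2 where "\<forall>t\<in>set ts1. fst t \<in> PA Q \<and> fst (snd t) \<in> S \<and> snd (snd t) \<in> PA Q"
      "x = (\<lambda>q. \<Sum>t\<leftarrow>ts1. trm Q t q)" "\<forall>t\<in>set ts2. fst t \<in> PA Q \<and> fst (snd t) \<in> S \<and> snd (snd t) \<in> PA Q"
      "y = (\<lambda>q. \<Sum>t\<leftarrow>ts2. trm Q t q)" by blast
  then show ?case by (intro exI[of _ "ts1 @ ts2"]) auto
next
  case (smult x c)
  then obtain ts where ts: "\<forall>t\<in>set ts. fst t \<in> PA Q \<and> fst (snd t) \<in> S \<and> snd (snd t) \<in> PA Q"
      "x = (\<lambda>q. \<Sum>t\<leftarrow>ts. trm Q t q)" by blast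
  let ?h = "\<lambda>t. ((\<lambda>p. c * fst t p), snd t)"
  have h: "trm Q (?h t) = (\<lambda>q. c * trm Q t q)" for t
    by (simp add: trm_def pmult_smult_left)
  show ?case
  proof (intro exI[of _ "map ?h ts"] conjI)
    show "\<forall>t\<in>set (map ?h ts). fst t \<in> PA Q \<and> fst (snd t) \<in> S \<and> snd (snd t) \<in> PA Q"
      using ts(1) by (auto intro: PA_smult)
    show "(\<lambda>p. c * x p) = (\<lambda>q. \<Sum>t\<leftarrow>map ?h ts. trm Q t q)"
      by (simp add: ts(2) h o_def sum_list_const_mult)
  qed
next
  case (lmult x a)
  then obtain ts where ts: "\<forall>t\<in>set ts. fst t \<in> PA Q \<and> fst (snd t) \<in> S \<and> snd (snd t) \<in> PA Q"
      "x = (\<lambda>q. \<Sum>t\<leftarrow>ts. trm Q t q)" by blast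
  let ?h = "\<lambda>t. (pmult Q a (fst t), snd t)"
  have h: "trm Q (?h t) = pmult Q a (trm Q t)" for t
    by (simp add: trm_def pmult_assoc)
  show ?case
  proof (intro exI[of _ "map ?h ts"] conjI)
    show "\<forall>t\<in>set (map ?h ts). fst t \<in> PA Q \<and> fst (snd t) \<in> S \<and> snd (snd t) \<in> PA Q"
      using ts(1) lmult by (auto intro: PA_pmult)
    show "pmult Q a x = (\<lambda>q. \<Sum>t\<leftarrow>map ?h ts. trm Q t q)"
      by (simp add: ts(2) h o_def pmult_sum_list_right)
  qed
next
  case (rmult x a)
  then obtain ts where ts: "\<forall>t\<in>set ts. fst t \<in> PA Q \<and> fst (snd t) \<in> S \<and> snd (snd t) \<in> PA Q"
      "x = (\<lambda>q. \<Sum>t\<leftarrow>ts. trm Q t q)" by blast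
  let ?h = "\<lambda>t. (fst t, fst (snd t), pmult Q (snd (snd t)) a)"
  have h: "trm Q (?h t) = pmult Q (trm Q t) a" for t
    by (simp add: trm_def pmult_assoc)
  show ?case
  proof (intro exI[of _ "map ?h ts"] conjI)
    show "\<forall>t\<in>set (map ?h ts). fst t \<in> PA Q \<and> fst (snd t) \<in> S \<and> snd (snd t) \<in> PA Q"
      using ts(1) rmult by (auto intro: PA_pmult)
    show "pmult Q x a = (\<lambda>q. \<Sum>t\<leftarrow>map ?h ts. trm Q t q)"
      by (simp add: ts(2) h o_def pmult_sum_list_left)
  qed
qed



lemma hd_th: assumes A: "1 \<le> A" and l: "l \<noteq> []" shows "hd (th A l) = (hd l, 1)"
proof -
  have "0 < A * length l" using A l by simp
  then have "th A l \<noteq> []" by (metis length_th less_numeral_extra(3) list.size(3))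
  then have "hd (th A l) = th A l ! 0" by (simp add: hd_conv_nth)
  also have "\<dots> = (l ! 0, 1)" using nth_th[OF A \<open>0 < A * length l\<close>] A by simp
  finally show ?thesis using l by (simp add: hd_conv_nth)
qed

lemma last_th: "1 \<le> A \<Longrightarrow> l \<noteq> [] \<Longrightarrow> last (th A l) = (last l, A)"
proof -
  assume A: "1 \<le> A" and l: "l \<noteq> []"
  have "th A l = th A (butlast l @ [last l])" using append_butlast_last_id[OF l] by simp
  also have "\<dots> = th A (butlast l) @ blk A (last l)" by simp
  finally have "th A l = th A (butlast l) @ blk A (last l)" .
  then show ?thesis by (simp add: last_append blk_ne[OF A] last_blk[OF A])
qed

lemma pi_pmult_L1:
  assumes A: "1 \<le> A" and hz: "\<And>w l. z (w, l) \<noteq> 0 \<Longrightarrow> l \<noteq> [] \<Longrightarrow> snd (hd l) = 1"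
  shows "pi A (pmult (stretch Q A) \<alpha> z) = pmult Q (pi A \<alpha>) (pi A z)"
proof (rule ext, clarify)
  fix v cs
  have "pi A (pmult (stretch Q A) \<alpha> z) (v, cs) =
     (\<Sum>k\<le>A * length cs. \<alpha> (Inl v, take k (th A cs)) *
          z (pend (stretch Q A) (Inl v) (take k (th A cs)), drop k (th A cs)))"
    by (simp add: pi_def theta_path_th pmult_at)
  also have "\<dots> = (\<Sum>i\<le>length cs. \<alpha> (Inl v, take (A*i) (th A cs)) *
          z (pend (stretch Q A) (Inl v) (take (A*i) (th A cs)), drop (A*i) (th A cs)))"
  proof (rule sum_mult_reindex[OF A])
    fix k assume k: "k \<le> A * length cs" "\<not> A dvd k"
    have "k \<noteq> A * length cs" using k(2) by auto
    then have kl: "k < A * length cs" using k(1) by simp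
    then have ne: "drop k (th A cs) \<noteq> []" by simp
    have "snd (hd (drop k (th A cs))) = k mod A + 1"
      using kl by (simp add: hd_drop_conv_nth nth_th[OF A])
    moreover have "k mod A \<noteq> 0" using k(2) by (simp add: dvd_eq_mod_eq_0)
    ultimately have "z (pend (stretch Q A) (Inl v) (take k (th A cs)), drop k (th A cs)) = 0"
    proof -
      assume a1: "snd (hd (drop k (th A cs))) = k mod A + 1" and a2: "k mod A \<noteq> 0"
      show ?thesis
      proof (rule ccontr)
        assume "z (pend (stretch Q A) (Inl v) (take k (th A cs)), drop k (th A cs)) \<noteq> 0"
        from hz[OF this ne] a1 a2 show False by simp
      qed
    qed
    then show "\<alpha> (Inl v, take k (th A cs)) *
          z (pend (stretch Q A) (Inl v) (take k (th A cs)), drop k (th A cs)) = 0" by simp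
  qed
  also have "\<dots> = pmult Q (pi A \<alpha>) (pi A z) (v, cs)"
    by (simp add: take_th drop_th pend_th[OF A] pmult_at pi_def theta_path_th)
  finally show "pi A (pmult (stretch Q A) \<alpha> z) (v, cs) = pmult Q (pi A \<alpha>) (pi A z) (v, cs)" .
qed

lemma pi_pmult_L2:
  assumes A: "1 \<le> A" and hz: "\<And>w l. z (w, l) \<noteq> 0 \<Longrightarrow> l \<noteq> [] \<Longrightarrow> snd (last l) = A"
  shows "pi A (pmult (stretch Q A) z \<beta>) = pmult Q (pi A z) (pi A \<beta>)"
proof (rule ext, clarify)
  fix v cs
  have "pi A (pmult (stretch Q A) z \<beta>) (v, cs) =
     (\<Sum>k\<le>A * length cs. z (Inl v, take k (th A cs)) *
          \<beta> (pend (stretch Q A) (Inl v) (take k (th A cs)), drop k (th A cs)))"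
    by (simp add: pi_def theta_path_th pmult_at)
  also have "\<dots> = (\<Sum>i\<le>length cs. z (Inl v, take (A*i) (th A cs)) *
          \<beta> (pend (stretch Q A) (Inl v) (take (A*i) (th A cs)), drop (A*i) (th A cs)))"
  proof (rule sum_mult_reindex[OF A])
    fix k assume k: "k \<le> A * length cs" "\<not> A dvd k"
    then have kl: "k \<le> A * length cs" "0 < k" by (auto intro: Nat.gr0I)
    then have "length (take k (th A cs)) = k" by simp
    then have ne: "take k (th A cs) \<noteq> []" using kl(2) by (metis less_numeral_extra(3) list.size(3))
    have len: "length (take k (th A cs)) = k" using kl by simp
    have "last (take k (th A cs)) = take k (th A cs) ! (k - 1)"
      using ne len by (simp add: last_conv_nth)
    also have "\<dots> = th A cs ! (k - 1)" using kl by simp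
    also have "\<dots> = (cs ! ((k - 1) div A), (k - 1) mod A + 1)"
      using kl by (intro nth_th[OF A]) auto
    finally have "snd (last (take k (th A cs))) = (k - 1) mod A + 1" by simp
    moreover have "(k - 1) mod A + 1 \<noteq> A"
    proof
      assume "(k - 1) mod A + 1 = A"
      then have "Suc (k - 1) mod A = 0" by (simp add: mod_Suc)
      then have "k mod A = 0" using kl by simp
      then show False using k(2) by (simp add: dvd_eq_mod_eq_0)
    qed
    ultimately have "z (Inl v, take k (th A cs)) = 0"
    proof -
      assume a1: "snd (last (take k (th A cs))) = (k - 1) mod A + 1" and a2: "(k - 1) mod A + 1 \<noteq> A"
      show ?thesis
      proof (rule ccontr)
        assume "z (Inl v, take k (th A cs)) \<noteq> 0"
        from hz[OF this ne] a1 a2 show False by simp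
      qed
    qed
    then show "z (Inl v, take k (th A cs)) *
          \<beta> (pend (stretch Q A) (Inl v) (take k (th A cs)), drop k (th A cs)) = 0" by simp
  qed
  also have "\<dots> = pmult Q (pi A z) (pi A \<beta>) (v, cs)"
    by (simp add: take_th drop_th pend_th[OF A] pmult_at pi_def theta_path_th)
  finally show "pi A (pmult (stretch Q A) z \<beta>) (v, cs) = pmult Q (pi A z) (pi A \<beta>) (v, cs)" .
qed

lemma pi_trm:
  assumes A: "1 \<le> A" and sne: "\<And>p. s p \<noteq> 0 \<Longrightarrow> snd p \<noteq> []"
  shows "pi A (pmult (stretch Q A) (pmult (stretch Q A) \<alpha> (theta A s)) \<beta>) =
         pmult Q (pmult Q (pi A \<alpha>) s) (pi A \<beta>)"
proof -
  have h1: "snd (hd l) = 1" if "theta A s (w, l) \<noteq> 0" "l \<noteq> []" for w l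
  proof -
    from theta_nz'[OF that(1)] obtain v l' where "l = th A l'" "s (v, l') \<noteq> 0" by blast
    then have "l' \<noteq> []" using that(2) by auto
    then show ?thesis using hd_th[OF A \<open>l' \<noteq> []\<close>] \<open>l = th A l'\<close> by simp
  qed
  have h2: "snd (last l) = A" if "pmult (stretch Q A) \<alpha> (theta A s) (w, l) \<noteq> 0" "l \<noteq> []" for w l
  proof -
    from that(1) obtain k where "k \<in> {..length l}"
        "\<alpha> (w, take k l) * theta A s (pend (stretch Q A) w (take k l), drop k l) \<noteq> 0"
      unfolding pmult_at by (meson sum.not_neutral_contains_not_neutral)
    then have "theta A s (pend (stretch Q A) w (take k l), drop k l) \<noteq> 0" by auto
    from theta_nz'[OF this] obtain v l' where l': "drop k l = th A l'" "s (v, l') \<noteq> 0" by blast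
    then have "l' \<noteq> []" using sne by fastforce
    have "length (drop k l) = A * length l'" using l'(1) by simp
    then have "drop k l \<noteq> []" using A \<open>l' \<noteq> []\<close> by (metis length_0_conv mult_is_0 not_one_le_zero)
    then have "last l = last (drop k l)" by (simp add: last_drop)
    then show ?thesis using l' last_th[OF A \<open>l' \<noteq> []\<close>] by simp
  qed
  have e1: "pi A (pmult (stretch Q A) (pmult (stretch Q A) \<alpha> (theta A s)) \<beta>) =
      pmult Q (pi A (pmult (stretch Q A) \<alpha> (theta A s))) (pi A \<beta>)"
    by (rule pi_pmult_L2[OF A]) (use h2 in blast)
  have e2: "pi A (pmult (stretch Q A) \<alpha> (theta A s)) = pmult Q (pi A \<alpha>) (pi A (theta A s))"
    by (rule pi_pmult_L1[OF A]) (use h1 in blast)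
  have e3: "pi A (theta A s) = s" by (rule pi_theta[OF A])
  show ?thesis using e1 e2 e3 by simp
qed



lemma stretch_min:
  fixes g :: "nat \<Rightarrow> ('v \<times> 'a list \<Rightarrow> 'k::field)" and Q :: "('v, 'a) quiver"
  assumes A: "1 \<le> A"
    and U: "\<forall>j<m. uniform (stretch Q A) (theta A (g j))"
    and ne: "\<forall>j<m. \<forall>p. g j p \<noteq> 0 \<longrightarrow> snd p \<noteq> []"
    and i: "i < m"
    and eq: "ideal_gen (stretch Q A) ((\<lambda>j. theta A (g j)) ` ({..<m} - {i})) =
             ideal_gen (stretch Q A) ((\<lambda>j. theta A (g j)) ` {..<m})"
  shows "g i \<in> ideal_gen Q (g ` ({..<m} - {i}))"
proof -
  let ?S = "(\<lambda>j. theta A (g j)) ` ({..<m} - {i})"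
  have "theta A (g i) \<in> ideal_gen (stretch Q A) ((\<lambda>j. theta A (g j)) ` {..<m})"
    using i by (auto intro: ideal_gen.gen)
  then have gi: "theta A (g i) \<in> ideal_gen (stretch Q A) ?S" using eq by simp
  have US: "\<forall>s\<in>?S. uniform (stretch Q A) s" using U by auto
  obtain ts where ts: "\<forall>t\<in>set ts. fst t \<in> PA (stretch Q A) \<and> fst (snd t) \<in> ?S \<and> snd (snd t) \<in> PA (stretch Q A)"
    and eqts: "theta A (g i) = (\<lambda>q. \<Sum>t\<leftarrow>ts. trm (stretch Q A) t q)"
    using ideal_repr[OF US gi] by blast
  have "g i = pi A (theta A (g i))" by (simp add: pi_theta[OF A])
  also have "\<dots> = (\<lambda>p. \<Sum>t\<leftarrow>ts. pi A (trm (stretch Q A) t) p)" by (simp add: eqts pi_def)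
  also have "\<dots> \<in> ideal_gen Q (g ` ({..<m} - {i}))"
  proof (rule ideal_sum_list, rule ballI)
    fix t assume "t \<in> set ts"
    with ts obtain j where j: "j \<in> {..<m} - {i}" "fst (snd t) = theta A (g j)"
      and pa: "fst t \<in> PA (stretch Q A)" "snd (snd t) \<in> PA (stretch Q A)" by blast
    have nej: "\<And>p. g j p \<noteq> 0 \<Longrightarrow> snd p \<noteq> []" using ne j by auto
    have "pi A (trm (stretch Q A) t) = pmult Q (pmult Q (pi A (fst t)) (g j)) (pi A (snd (snd t)))"
      unfolding trm_def j(2) by (rule pi_trm[OF A nej])
    also have "\<dots> \<in> ideal_gen Q (g ` ({..<m} - {i}))"
      using j(1) by (intro ideal_gen.rmult ideal_gen.lmult ideal_gen.gen PA_pi[OF A] pa) auto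
    finally show "pi A (trm (stretch Q A) t) \<in> ideal_gen Q (g ` ({..<m} - {i}))" .
  qed
  finally show ?thesis .
qed

lemma pmult_path_elem_at:
  "pmult Q (path_elem (v, l1)) (path_elem (pend Q v l1, l2)) (v', cs) = (path_elem (v, l1 @ l2) (v', cs) :: 'k::field)"
proof -
  let ?f = "\<lambda>k. (path_elem (v, l1) (v', take k cs) :: 'k) * path_elem (pend Q v l1, l2) (pend Q v' (take k cs), drop k cs)"
  have f: "?f k = (if k = length l1 then (if v' = v \<and> cs = l1 @ l2 then 1 else 0) else 0)"
    if "k \<in> {..length cs}" for k
  proof -
    have kl: "k \<le> length cs" using that by simp
    show ?thesis
    proof (cases "v' = v \<and> take k cs = l1 \<and> drop k cs = l2")
      case True
      then have "k = length l1" using kl by auto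
      moreover have "cs = l1 @ l2" using True by (metis append_take_drop_id)
      ultimately show ?thesis using True by (auto simp: path_elem_def)
    next
      case False
      then have "?f k = 0" by (auto simp: path_elem_def)
      moreover have "\<not> (k = length l1 \<and> v' = v \<and> cs = l1 @ l2)" using False by auto
      ultimately show ?thesis by auto
    qed
  qed
  have "pmult Q (path_elem (v, l1)) (path_elem (pend Q v l1, l2)) (v', cs) = (\<Sum>k\<le>length cs. ?f k)"
    by (simp add: pmult_at)
  also have "\<dots> = (\<Sum>k\<le>length cs. (if k = length l1 then (if v' = v \<and> cs = l1 @ l2 then 1 else 0) else 0))"
    by (rule sum.cong[OF refl]) (rule f)
  also have "\<dots> = (if length l1 \<in> {..length cs} then (if v' = v \<and> cs = l1 @ l2 then 1 else 0) else 0)"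
    by (rule sum.delta[OF finite_atMost])
  also have "\<dots> = path_elem (v, l1 @ l2) (v', cs)"
    by (auto simp: path_elem_def)
  finally show ?thesis .
qed

lemma pmult_path_elem:
  "pmult Q (path_elem (v, l1)) (path_elem (pend Q v l1, l2)) = (path_elem (v, l1 @ l2) :: _ \<Rightarrow> 'k::field)"
  by (rule ext, clarify, rule pmult_path_elem_at)

lemma pend_in_verts: "quiver Q \<Longrightarrow> v \<in> verts Q \<Longrightarrow> chain Q v l \<Longrightarrow> pend Q v l \<in> verts Q"
  by (induction l arbitrary: v) (auto simp: quiver_def)

lemma chain_set: "chain Q v l \<Longrightarrow> set l \<subseteq> arrs Q"
  by (induction l arbitrary: v) auto

lemma block_prefix:
  assumes "chain (stretch Q A) w l" "l \<noteq> []" "hd l = (a, j)" "1 \<le> j" "A + 1 - j \<le> length l"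
  shows "take (A + 1 - j) l = map (\<lambda>i. (a, i)) [j..<A+1]"
  using assms
proof (induction "A + 1 - j" arbitrary: j w l)
  case 0
  then show ?case by simp
next
  case (Suc n)
  obtain l' where l: "l = (a, j) # l'" using Suc.prems(2,3) by (cases l) auto
  have jA: "j \<le> A" using Suc.prems(1) l by (auto simp: arrs_stretch)
  show ?case
  proof (cases "j = A")
    case True
    then show ?thesis using l by (simp add: upt_conv_Cons)
  next
    case False
    then have l'ne: "l' \<noteq> []" using Suc.prems(5) l jA by auto
    obtain b j' l'' where l': "l' = (b, j') # l''" using l'ne by (cases l') auto
    have c': "chain (stretch Q A) (tgt (stretch Q A) (a, j)) l'" using Suc.prems(1) l by simp
    then have "src (stretch Q A) (b, j') = Inr (a, j)" using False l' by (simp add: tgt_stretch)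
    then have bj: "b = a" "j' = Suc j" using Suc.prems(4) by (auto simp: src_stretch split: if_splits)
    have "take (A + 1 - Suc j) l' = map (\<lambda>i. (a, i)) [Suc j..<A+1]"
      using Suc.hyps(1)[of "Suc j" _ l'] Suc.hyps(2) c' l'ne l' bj Suc.prems(5) l jA False by auto
    then show ?thesis using l jA False by (simp add: upt_conv_Cons Suc_diff_le)
  qed
qed

lemma Inl_prefix:
  assumes A: "1 \<le> A" and c: "chain (stretch Q A) (Inl v) l" and len: "A \<le> length l"
  shows "\<exists>a. take A l = blk A a \<and> pend (stretch Q A) (Inl v) (take A l) = Inl (tgt Q a)"
proof -
  have ne: "l \<noteq> []" using A len by auto
  obtain a j l' where l: "l = (a, j) # l'" using ne by (cases l) auto
  have "src (stretch Q A) (a, j) = Inl v" using c l by simp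
  then have "j = 1" by (auto simp: src_stretch split: if_splits)
  then have "take A l = blk A a"
    using block_prefix[OF c ne, of a 1] l len by (simp add: blk_def)
  then show ?thesis using pend_blk[OF A, of Q "Inl v" a] by auto
qed

lemma chain_Inl_decomp:
  assumes A: "1 \<le> A"
  shows "chain (stretch Q A) (Inl v) l \<Longrightarrow> A * n \<le> length l \<Longrightarrow> \<exists>r. take (A * n) l = th A r \<and> length r = n"
proof (induction n arbitrary: v l)
  case 0 then show ?case by (intro exI[of _ "[]"]) simp
next
  case (Suc n)
  have len: "A \<le> length l" using Suc.prems(2) by simp
  obtain a where a: "take A l = blk A a" "pend (stretch Q A) (Inl v) (take A l) = Inl (tgt Q a)"
    using Inl_prefix[OF A Suc.prems(1) len] by blast
  have c: "chain (stretch Q A) (Inl (tgt Q a)) (drop A l)"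
    using Suc.prems(1) a(2) chain_append[of "stretch Q A" "Inl v" "take A l" "drop A l"] by simp
  have "A * n \<le> length (drop A l)" using Suc.prems(2) by simp
  then obtain r where r: "take (A * n) (drop A l) = th A r" "length r = n"
    using Suc.IH[OF c] by blast
  have "take (A * Suc n) l = take A l @ take (A * n) (drop A l)"
    by (simp add: take_add)
  then show ?case using a r by (intro exI[of _ "a # r"]) simp
qed



lemma reach_Inl:
  assumes A: "1 \<le> A" and c: "chain (stretch Q A) w l" and len: "A \<le> length l"
  shows "\<exists>i0 v0. i0 < A \<and> pend (stretch Q A) w (take i0 l) = Inl v0"
proof -
  have ne: "l \<noteq> []" using A len by auto
  obtain a j l' where l: "l = (a, j) # l'" using ne by (cases l) auto
  have j: "1 \<le> j" "j \<le> A" using c l by (auto simp: arrs_stretch)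
  have w: "src (stretch Q A) (a, j) = w" using c l by simp
  show ?thesis
  proof (cases "j = 1")
    case True
    then have "w = Inl (src Q a)" using w by (simp add: src_stretch)
    then show ?thesis using A by (intro exI[of _ 0]) auto
  next
    case False
    have tk: "take (A + 1 - j) l = map (\<lambda>i. (a, i)) [j..<A+1]"
      using block_prefix[OF c ne, of a j] l j len by simp
    have "pend (stretch Q A) w (take (A + 1 - j) l) = Inl (tgt Q a)"
      unfolding tk using j by (simp add: pend_last last_map tgt_stretch upt_Suc)
    then show ?thesis using False j by (intro exI[of _ "A + 1 - j"]) auto
  qed
qed

lemma Inl_verts: "Inl v \<in> verts (stretch Q A) \<Longrightarrow> v \<in> verts Q"
  by (auto simp: verts_stretch)

lemma long_path:
  fixes S :: "('v \<times> 'a list \<Rightarrow> 'k::field) set" and Q :: "('v, 'a) quiver"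
  assumes A: "1 \<le> A" and Q: "quiver Q" and N: "supp_len_ge Q N \<subseteq> ideal_gen Q S"
    and p: "is_path (stretch Q A) (w, l)" and len: "A * (N + 1) \<le> length l"
  shows "(path_elem (w, l) :: _ \<Rightarrow> 'k) \<in> ideal_gen (stretch Q A) (theta A ` S)"
proof -
  let ?Q = "stretch Q A"
  have QQ: "quiver ?Q" by (rule quiver_stretch[OF Q])
  have c: "chain ?Q w l" and w: "w \<in> verts ?Q" using p by (auto simp: is_path_def)
  have "A \<le> length l" using len by simp
  then obtain i0 v0 where i0: "i0 < A" "pend ?Q w (take i0 l) = Inl v0"
    using reach_Inl[OF A c] by blast
  define d where "d = drop i0 l"
  have ld: "l = take i0 l @ d" by (simp add: d_def)
  have c1: "chain ?Q w (take i0 l)" and c2: "chain ?Q (Inl v0) d"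
    using c ld chain_append[of ?Q w "take i0 l" d] i0(2) by auto
  have "A * N \<le> length d" using len i0(1) by (simp add: d_def)
  then obtain r where r: "take (A * N) d = th A r" "length r = N"
    using chain_Inl_decomp[OF A c2] by blast
  define e where "e = drop (A * N) d"
  have de: "d = th A r @ e" using r(1) by (metis append_take_drop_id e_def)
  have c3: "chain ?Q (Inl v0) (th A r)" and c4: "chain ?Q (pend ?Q (Inl v0) (th A r)) e"
    using c2 de chain_append[of ?Q "Inl v0" "th A r" e] by auto
  have v0: "Inl v0 \<in> verts ?Q" using pend_in_verts[OF QQ w c1] i0(2) by simp
  have cr: "chain Q v0 r" by (rule chain_th_rev[OF A c3])
  have pr: "is_path Q (v0, r)" using cr Inl_verts[OF v0] by (simp add: is_path_def)
  have "(path_elem (v0, r) :: _ \<Rightarrow> 'k) \<in> supp_len_ge Q N"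
    using path_elem_PA[OF pr] r(2) by (auto simp: supp_len_ge_def path_elem_def split: if_splits)
  then have "(path_elem (v0, r) :: _ \<Rightarrow> 'k) \<in> ideal_gen Q S" using N by blast
  then have "theta A (path_elem (v0, r) :: _ \<Rightarrow> 'k) \<in> ideal_gen ?Q (theta A ` S)"
    by (rule theta_ideal[OF A])
  then have m1: "(path_elem (Inl v0, th A r) :: _ \<Rightarrow> 'k) \<in> ideal_gen ?Q (theta A ` S)"
    by (simp add: theta_path_elem[OF A] theta_path_th)
  have pa1: "(path_elem (w, take i0 l) :: _ \<Rightarrow> 'k) \<in> PA ?Q"
    using w c1 by (intro path_elem_PA) (simp add: is_path_def)
  have "pmult ?Q (path_elem (w, take i0 l)) (path_elem (Inl v0, th A r)) \<in> ideal_gen ?Q (theta A ` S)"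
    by (rule ideal_gen.lmult[OF m1 pa1])
  moreover have "pmult ?Q (path_elem (w, take i0 l)) (path_elem (pend ?Q w (take i0 l), th A r)) =
      (path_elem (w, take i0 l @ th A r) :: _ \<Rightarrow> 'k)" by (rule pmult_path_elem)
  ultimately have m2: "(path_elem (w, take i0 l @ th A r) :: _ \<Rightarrow> 'k) \<in> ideal_gen ?Q (theta A ` S)"
    using i0(2) by simp
  have pe: "pend ?Q w (take i0 l @ th A r) = pend ?Q (Inl v0) (th A r)"
    using i0(2) by (simp add: pend_append)
  have pa2: "(path_elem (pend ?Q w (take i0 l @ th A r), e) :: _ \<Rightarrow> 'k) \<in> PA ?Q"
    using pend_in_verts[OF QQ v0 c3] c4 pe by (intro path_elem_PA) (simp add: is_path_def)
  have "pmult ?Q (path_elem (w, take i0 l @ th A r)) (path_elem (pend ?Q w (take i0 l @ th A r), e))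
     \<in> ideal_gen ?Q (theta A ` S)"
    by (rule ideal_gen.rmult[OF m2 pa2])
  moreover have "pmult ?Q (path_elem (w, take i0 l @ th A r)) (path_elem (pend ?Q w (take i0 l @ th A r), e)) =
      (path_elem (w, (take i0 l @ th A r) @ e) :: _ \<Rightarrow> 'k)" by (rule pmult_path_elem)
  ultimately show ?thesis using ld de by simp
qed

lemma ideal_sum_set:
  "finite P \<Longrightarrow> (\<forall>p\<in>P. F p \<in> ideal_gen Q S) \<Longrightarrow> (\<lambda>q. \<Sum>p\<in>P. F p q) \<in> ideal_gen Q S"
proof (induction P rule: finite_induct)
  case empty then show ?case by (simp add: ideal_gen.zero)
next
  case (insert x P)
  then have "(\<lambda>q. F x q + (\<lambda>q. \<Sum>p\<in>P. F p q) q) \<in> ideal_gen Q S"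
    by (intro ideal_gen.add) auto
  then show ?case using insert by simp
qed

lemma path_elem_inj: "inj (path_elem :: _ \<Rightarrow> _ \<Rightarrow> 'k::field)"
proof (rule injI)
  fix p q assume "(path_elem p :: _ \<Rightarrow> 'k) = path_elem q"
  then have "(path_elem p p :: 'k) = path_elem q p" by simp
  then show "p = q" by (simp add: path_elem_def split: if_splits)
qed

lemma fin_dim_stretch:
  fixes S :: "('v \<times> 'a list \<Rightarrow> 'k::field) set" and Q :: "('v, 'a) quiver"
  assumes A: "1 \<le> A" and Q: "quiver Q" and N: "supp_len_ge Q N \<subseteq> ideal_gen Q S"
  shows "fin_dim_quot (stretch Q A) (ideal_gen (stretch Q A) (theta A ` S))"
proof -
  let ?Q = "stretch Q A"
  let ?L = "A * (N + 1)"
  define P where "P = {p. is_path ?Q p \<and> length (snd p) < ?L}"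
  have QQ: "quiver ?Q" by (rule quiver_stretch[OF Q])
  have "P \<subseteq> verts ?Q \<times> {xs. set xs \<subseteq> arrs ?Q \<and> length xs \<le> ?L}"
    using chain_set by (fastforce simp: P_def is_path_def)
  moreover have "finite (verts ?Q \<times> {xs. set xs \<subseteq> arrs ?Q \<and> length xs \<le> ?L})"
    using QQ by (intro finite_cartesian_product finite_lists_length_le) (auto simp: quiver_def)
  ultimately have finP: "finite P" by (rule finite_subset)
  define F where "F = (path_elem ` P :: (_ \<Rightarrow> 'k) set)"
  have injP: "inj_on (path_elem :: _ \<Rightarrow> _ \<Rightarrow> 'k) P" using path_elem_inj by (rule inj_on_subset) simp
  show ?thesis unfolding fin_dim_quot_def
  proof (intro exI[of _ F] conjI ballI)
    show "finite F" using finP by (simp add: F_def)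
    show "F \<subseteq> PA ?Q" by (auto simp: F_def P_def intro: path_elem_PA)
  next
    fix x :: "('v + 'a \<times> nat) \<times> ('a \<times> nat) list \<Rightarrow> 'k" assume x: "x \<in> PA ?Q"
    define c :: "(('v + 'a \<times> nat) \<times> ('a \<times> nat) list \<Rightarrow> 'k) \<Rightarrow> 'k"
      where "c f = x (inv_into P path_elem f)" for f
    define R where "R p = (if p \<in> P then 0 else x p)" for p
    have sumF: "(\<Sum>f\<in>F. c f * f p) = (if p \<in> P then x p else 0)" for p
    proof -
      have "(\<Sum>f\<in>F. c f * f p) = (\<Sum>q\<in>P. c (path_elem q) * path_elem q p)"
        unfolding F_def by (rule sum.reindex[OF injP, unfolded o_def])
      also have "\<dots> = (\<Sum>q\<in>P. if p = q then x q else 0)"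
      proof (rule sum.cong[OF refl])
        fix q assume q: "q \<in> P"
        have "c (path_elem q) = x q" unfolding c_def using inv_into_f_f[OF injP q] by simp
        then show "c (path_elem q) * path_elem q p = (if p = q then x q else 0)"
          by (simp add: path_elem_def)
      qed
      also have "\<dots> = (if p \<in> P then x p else 0)"
        using finP by simp
      finally show ?thesis .
    qed
    have Req: "(\<lambda>p. x p - (\<Sum>f\<in>F. c f * f p)) = R"
      by (rule ext) (simp add: sumF R_def)
    define SR where "SR = {p. R p \<noteq> 0}"
    have finSR: "finite SR" using x by (auto simp: SR_def R_def PA_def intro: finite_subset[of _ "{p. x p \<noteq> 0}"])
    have R2: "R = (\<lambda>q. \<Sum>p\<in>SR. R p * path_elem p q)"
    proof
      fix q
      have "(\<Sum>p\<in>SR. R p * path_elem p q) = (\<Sum>p\<in>SR. if q = p then R p else 0)"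
        by (rule sum.cong[OF refl]) (simp add: path_elem_def)
      also have "\<dots> = R q" using finSR by (simp add: SR_def)
      finally show "R q = (\<Sum>p\<in>SR. R p * path_elem p q)" by simp
    qed
    have "(\<lambda>q. \<Sum>p\<in>SR. R p * path_elem p q) \<in> ideal_gen ?Q (theta A ` S)"
    proof (rule ideal_sum_set[OF finSR], rule ballI)
      fix p assume "p \<in> SR"
      then have "R p \<noteq> 0" by (simp add: SR_def)
      then have "p \<notin> P" "x p \<noteq> 0" by (auto simp: R_def split: if_splits)
      have pp1: "is_path ?Q p" using x \<open>x p \<noteq> 0\<close> unfolding PA_def by blast
      then have pp: "is_path ?Q p" "?L \<le> length (snd p)" using \<open>p \<notin> P\<close> by (auto simp: P_def)
      obtain w l where "p = (w, l)" by fastforce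
      then have "(path_elem p :: _ \<Rightarrow> 'k) \<in> ideal_gen ?Q (theta A ` S)"
        using long_path[OF A Q N, of w l] pp by simp
      then show "(\<lambda>q. R p * path_elem p q) \<in> ideal_gen ?Q (theta A ` S)"
        by (rule ideal_gen.smult)
    qed
    then show "\<exists>c. (\<lambda>p. x p - (\<Sum>f\<in>F. c f * f p)) \<in> ideal_gen ?Q (theta A ` S)"
      using Req R2 by (intro exI[of _ c]) simp
  qed
qed



lemma len_homog_theta: "len_homog x d \<Longrightarrow> len_homog (theta A x) (d * A)"
  unfolding len_homog_def
proof (intro allI impI)
  fix q assume h: "\<forall>p. x p \<noteq> 0 \<longrightarrow> length (snd p) = d" and q: "theta A x q \<noteq> 0"
  from theta_nz[OF q] obtain p where "q = theta_path A p" "x p \<noteq> 0" by blast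
  moreover have "length (snd p) = d" using h \<open>x p \<noteq> 0\<close> by blast
  ultimately show "length (snd q) = d * A" by (simp add: theta_path_th)
qed

lemma card_stretch:
  fixes Q :: "('v, 'a) quiver"
  assumes Q: "quiver Q"
  shows "card (verts (stretch Q A)) = card (verts Q) + card (arrs Q) * (A - 1)"
    and "card (arrs (stretch Q A)) = card (arrs Q) * A"
proof -
  have fV: "finite (verts Q)" and fE: "finite (arrs Q)" using Q by (auto simp: quiver_def)
  have e1: "{Inr (a, j) :: 'v + 'a \<times> nat | a j. a \<in> arrs Q \<and> 1 \<le> j \<and> j \<le> A - 1} = Inr ` (arrs Q \<times> {1..A - 1})"
    by auto
  have e2: "{(a, j) | a j. a \<in> arrs Q \<and> 1 \<le> j \<and> j \<le> A} = arrs Q \<times> {1..A}" by auto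
  have d: "Inl ` verts Q \<inter> Inr ` (arrs Q \<times> {1..A - 1}) = ({} :: ('v + 'a \<times> nat) set)" by auto
  have "card (Inl ` verts Q \<union> Inr ` (arrs Q \<times> {1..A - 1}) :: ('v + 'a \<times> nat) set)
      = card (Inl ` verts Q :: ('v + 'a \<times> nat) set) + card (Inr ` (arrs Q \<times> {1..A - 1}) :: ('v + 'a \<times> nat) set)"
    using fV fE d by (intro card_Un_disjoint) auto
  also have "\<dots> = card (verts Q) + card (arrs Q) * (A - 1)"
    by (simp add: card_image card_cartesian_product)
  moreover have "verts (stretch Q A) = Inl ` verts Q \<union> Inr ` (arrs Q \<times> {1..A - 1})"
    unfolding verts_stretch e1 ..
  ultimately show "card (verts (stretch Q A)) = card (verts Q) + card (arrs Q) * (A - 1)"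
    by simp
  show "card (arrs (stretch Q A)) = card (arrs Q) * A"
    unfolding arrs_stretch e2 by (simp add: card_cartesian_product)
qed

theorem proposition1p7:
  fixes Q :: "('v, 'a) quiver"
    and g :: "nat \<Rightarrow> ('v \<times> 'a list \<Rightarrow> 'k::field)"
    and m A :: nat
  assumes "quiver Q"
    and "admissible Q (ideal_gen Q (g ` {..<m}))"
    and "fin_dim_quot Q (ideal_gen Q (g ` {..<m}))"
    and "min_gen_set Q g m (ideal_gen Q (g ` {..<m}))"
    and "1 \<le> A"
  shows
   "fin_dim_quot (stretch Q A) (ideal_gen (stretch Q A) ((\<lambda>i. theta A (g i)) ` {..<m}))
  \<and> card (verts (stretch Q A)) = card (verts Q) + card (arrs Q) * (A - 1)
  \<and> card (arrs (stretch Q A)) = card (arrs Q) * A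
  \<and> min_gen_set (stretch Q A) (\<lambda>i. theta A (g i)) m
       (ideal_gen (stretch Q A) ((\<lambda>i. theta A (g i)) ` {..<m}))
  \<and> (gen_by_homog Q (ideal_gen Q (g ` {..<m})) \<longrightarrow>
       gen_by_homog (stretch Q A) (ideal_gen (stretch Q A) ((\<lambda>i. theta A (g i)) ` {..<m})))
  \<and> (\<forall>d. gen_by_homog_len Q (ideal_gen Q (g ` {..<m})) d \<longrightarrow>
       gen_by_homog_len (stretch Q A) (ideal_gen (stretch Q A) ((\<lambda>i. theta A (g i)) ` {..<m})) (d * A))
  \<and> (monomial Q (ideal_gen Q (g ` {..<m})) \<longrightarrow>
       monomial (stretch Q A) (ideal_gen (stretch Q A) ((\<lambda>i. theta A (g i)) ` {..<m})))"
proof -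
  note Q = assms(1) and A = assms(5)
  let ?Q = "stretch Q A"
  let ?I = "ideal_gen Q (g ` {..<m})"
  let ?gt = "\<lambda>i. theta A (g i)"
  let ?J = "ideal_gen ?Q (?gt ` {..<m})"
  have img: "theta A ` g ` {..<m} = ?gt ` {..<m}" by (rule image_image)
  have gPA: "\<And>i. i < m \<Longrightarrow> g i \<in> PA Q" and gU: "\<And>i. i < m \<Longrightarrow> uniform Q (g i)"
    and gmin: "\<And>i. i < m \<Longrightarrow> ideal_gen Q (g ` ({..<m} - {i})) \<noteq> ?I"
    using assms(4) by (auto simp: min_gen_set_def)
  have I2: "?I \<subseteq> supp_len_ge Q 2" and "\<exists>N\<ge>2. supp_len_ge Q N \<subseteq> ?I"
    using assms(2) by (auto simp: admissible_def)
  then obtain N where N: "supp_len_ge Q N \<subseteq> ?I" by blast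
  have ne: "\<forall>j<m. \<forall>p. g j p \<noteq> 0 \<longrightarrow> snd p \<noteq> []"
  proof (intro allI impI)
    fix j p assume j: "j < m" and p: "g j p \<noteq> 0"
    have "g j \<in> ?I" using j by (auto intro: ideal_gen.gen)
    then have "g j \<in> supp_len_ge Q 2" using I2 by blast
    then have "2 \<le> length (snd p)" using p unfolding supp_len_ge_def by blast
    then show "snd p \<noteq> []" by auto
  qed
  have thI: "theta A x \<in> ?J" if "x \<in> ?I" for x
    using theta_ideal[OF A that] img by simp
  have UT: "\<forall>j<m. uniform ?Q (theta A (g j))"
  proof (intro allI impI)
    fix j assume j: "j < m"
    obtain v v' where vv: "v \<in> verts Q" "v' \<in> verts Q" and e1: "g j = pmult Q (vtx v) (g j)"
      and e2: "g j = pmult Q (g j) (vtx v')"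
      using gU[OF j] by (auto simp: uniform_def)
    have t1: "theta A (g j) = pmult ?Q (vtx (Inl v)) (theta A (g j))"
      using arg_cong[OF e1, of "theta A"] by (simp only: theta_pmult[OF A] theta_vtx[OF A])
    have t2: "theta A (g j) = pmult ?Q (theta A (g j)) (vtx (Inl v'))"
      using arg_cong[OF e2, of "theta A"] by (simp only: theta_pmult[OF A] theta_vtx[OF A])
    show "uniform ?Q (theta A (g j))"
      unfolding uniform_def using vv t1 t2 by (auto simp: verts_stretch)
  qed
  have transfer: "ideal_gen ?Q (theta A ` G) = ?J" if G: "ideal_gen Q G = ?I" for G
  proof
    show "ideal_gen ?Q (theta A ` G) \<subseteq> ?J"
    proof
      fix y assume "y \<in> ideal_gen ?Q (theta A ` G)"
      moreover have "theta A ` G \<subseteq> ?J"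
        using G thI by (auto intro: ideal_gen.gen)
      ultimately show "y \<in> ?J" using ideal_gen_subset by blast
    qed
    show "?J \<subseteq> ideal_gen ?Q (theta A ` G)"
    proof
      fix y assume "y \<in> ?J"
      moreover have "?gt ` {..<m} \<subseteq> ideal_gen ?Q (theta A ` G)"
      proof (rule image_subsetI)
        fix i assume "i \<in> {..<m}"
        then have "g i \<in> ideal_gen Q G" using G by (auto intro: ideal_gen.gen)
        then show "theta A (g i) \<in> ideal_gen ?Q (theta A ` G)" by (rule theta_ideal[OF A])
      qed
      ultimately show "y \<in> ideal_gen ?Q (theta A ` G)" using ideal_gen_subset by blast
    qed
  qed
  have P1: "fin_dim_quot ?Q ?J"
    using fin_dim_stretch[OF A Q N] img by simp
  have P3: "min_gen_set ?Q ?gt m ?J"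
    unfolding min_gen_set_def
  proof (intro conjI allI impI)
    fix i assume i: "i < m"
    show "theta A (g i) \<in> PA ?Q" by (rule PA_theta[OF A gPA[OF i]])
    show "uniform ?Q (theta A (g i))" using UT i by blast
  next
    show "?J = ?J" ..
  next
    fix i assume i: "i < m"
    show "ideal_gen ?Q (?gt ` ({..<m} - {i})) \<noteq> ?J"
    proof
      assume eq: "ideal_gen ?Q (?gt ` ({..<m} - {i})) = ?J"
      have gi: "g i \<in> ideal_gen Q (g ` ({..<m} - {i}))"
        by (rule stretch_min[OF A UT ne i eq])
      have "g ` {..<m} \<subseteq> ideal_gen Q (g ` ({..<m} - {i}))"
      proof (rule image_subsetI)
        fix j assume "j \<in> {..<m}"
        then show "g j \<in> ideal_gen Q (g ` ({..<m} - {i}))"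
          using gi by (cases "j = i") (auto intro: ideal_gen.gen)
      qed
      then have "?I \<subseteq> ideal_gen Q (g ` ({..<m} - {i}))" using ideal_gen_subset by blast
      moreover have "ideal_gen Q (g ` ({..<m} - {i})) \<subseteq> ?I" by (rule ideal_gen_mono) auto
      ultimately show False using gmin[OF i] by blast
    qed
  qed
  have P4: "gen_by_homog Q ?I \<longrightarrow> gen_by_homog ?Q ?J"
  proof
    assume "gen_by_homog Q ?I"
    then obtain G where G: "G \<subseteq> PA Q" "ideal_gen Q G = ?I" "\<forall>x\<in>G. \<exists>d. len_homog x d"
      by (auto simp: gen_by_homog_def)
    show "gen_by_homog ?Q ?J" unfolding gen_by_homog_def
    proof (intro exI[of _ "theta A ` G"] conjI)
      show "theta A ` G \<subseteq> PA ?Q" using G(1) PA_theta[OF A] by blast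
      show "ideal_gen ?Q (theta A ` G) = ?J" by (rule transfer[OF G(2)])
      show "\<forall>x\<in>theta A ` G. \<exists>d. len_homog x d" using G(3) len_homog_theta by blast
    qed
  qed
  have P5: "\<forall>d. gen_by_homog_len Q ?I d \<longrightarrow> gen_by_homog_len ?Q ?J (d * A)"
  proof (intro allI impI)
    fix d assume "gen_by_homog_len Q ?I d"
    then obtain G where G: "G \<subseteq> PA Q" "ideal_gen Q G = ?I" "\<forall>x\<in>G. len_homog x d"
      by (auto simp: gen_by_homog_len_def)
    show "gen_by_homog_len ?Q ?J (d * A)" unfolding gen_by_homog_len_def
    proof (intro exI[of _ "theta A ` G"] conjI)
      show "theta A ` G \<subseteq> PA ?Q" using G(1) PA_theta[OF A] by blast
      show "ideal_gen ?Q (theta A ` G) = ?J" by (rule transfer[OF G(2)])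
      show "\<forall>x\<in>theta A ` G. len_homog x (d * A)" using G(3) len_homog_theta by blast
    qed
  qed
  have P6: "monomial Q ?I \<longrightarrow> monomial ?Q ?J"
  proof
    assume "monomial Q ?I"
    then obtain P where P: "\<forall>p\<in>P. is_path Q p" "ideal_gen Q (path_elem ` P) = ?I"
      by (auto simp: monomial_def)
    have "path_elem ` theta_path A ` P = theta A ` (path_elem ` P :: ('v \<times> 'a list \<Rightarrow> 'k) set)"
      by (simp add: image_image theta_path_elem[OF A])
    then have "ideal_gen ?Q (path_elem ` theta_path A ` P) = ?J"
      using transfer[OF P(2)] by simp
    moreover have "\<forall>p\<in>theta_path A ` P. is_path ?Q p" using P(1) is_path_theta[OF A] by blast
    ultimately show "monomial ?Q ?J" unfolding monomial_def by blast
  qed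
  show ?thesis using P1 card_stretch[OF Q] P3 P4 P5 P6 by blast
qed

end
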